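(* Let $s$ be a continuous proper scoring rule with convex exposure on an $n$-outcome forecast domain $\mathcal{D}$, with expected reward function $G$ and exposure function $\mathbf{g}$. Let $\mathbf{p}_1,\dots,\mathbf{p}_m\in\mathcal{D}$ and non-negative weights $w_1,\dots,w_m$ with $\sum_i w_i=1$. Then the function \[d(\mathbf{x}):=\sum_{i=1}^m w_i\,D_G(\mathbf{x}\parallel\mathbf{p}_i),\qquad \mathbf{x}\in\mathcal{D},\] is uniquely minimized at $\mathbf{x}=\mathbf{p}^*$, the quasi-arithmetic pool of $(\mathbf{p}_i,w_i)_{i=1}^m$ with respect to $\mathbf{g}$.
   Context: $\Delta^n$ is the standard simplex in $\mathbb{R}^n$ with vertices $\delta_1,\dots,\delta_n$. An $n$-outcome forecast domain is a convex $(n-1)$-dimensional subset of $\Delta^n$. A proper scoring rule on $\mathcal{D}$ is $s:\mathcal{D}\times[n]\to\mathbb{R}$ with $\sum_j p(j)s(\mathbf{p};j)\ge\sum_j p(j)s(\mathbf{x};j)$ for all $\mathbf{p},\mathbf{x}\in\mathcal{D}$, equality only if $\mathbf{x}=\mathbf{p}$. $G(\mathbf{p}):=\sum_j p(j)s(\mathbf{p};j)$ is differentiable and strictly convex for continuous $s$, and $\mathbf{g}=\nabla G$ (values taken modulo translation by $\mathbf{1}_n$). Convex exposure means the range of $\mathbf{g}$ is convex. The QA pool is the unique $\mathbf{p}^*\in\mathcal{D}$ with $\mathbf{g}(\mathbf{p}^* )=\sum_i w_i\mathbf{g}(\mathbf{p}_i)$ (modulo $\mathbf{1}_n$). The Bregman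 divergence is $D_G(\mathbf{p}\parallel\mathbf{q}):=G(\mathbf{p})-G(\mathbf{q})-\langle\mathbf{g}(\mathbf{q}),\mathbf{p}-\mathbf{q}\rangle$. *)

theory Defs
  imports "HOL-Analysis.Analysis"
begin

text \<open>Outcomes are indexed by a finite type 'n with CARD('n) = n; forecasts are vectors in real^'n.\<close>

definition std_simplex :: "(real^'n) set" where
  "std_simplex = {p. (\<forall>j. 0 \<le> p $ j) \<and> (\<Sum>j\<in>UNIV. p $ j) = 1}"

definition forecast_domain :: "(real^'n) set \<Rightarrow> bool" where
  "forecast_domain D \<longleftrightarrow> convex D \<and> D \<subseteq> std_simplex \<and> aff_dim D = int CARD('n) - 1"

definition proper_scoring_rule :: "(real^'n) set \<Rightarrow> (real^'n \<Rightarrow> 'n \<Rightarrow> real) \<Rightarrow> bool" where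
  "proper_scoring_rule D s \<longleftrightarrow>
     (\<forall>p\<in>D. \<forall>x\<in>D. (\<Sum>j\<in>UNIV. p $ j * s x j) \<le> (\<Sum>j\<in>UNIV. p $ j * s p j)
        \<and> ((\<Sum>j\<in>UNIV. p $ j * s x j) = (\<Sum>j\<in>UNIV. p $ j * s p j) \<longrightarrow> x = p))"

definition continuous_scoring_rule :: "(real^'n) set \<Rightarrow> (real^'n \<Rightarrow> 'n \<Rightarrow> real) \<Rightarrow> bool" where
  "continuous_scoring_rule D s \<longleftrightarrow> (\<forall>j. continuous_on D (\<lambda>p. s p j))"

definition expected_reward :: "(real^'n \<Rightarrow> 'n \<Rightarrow> real) \<Rightarrow> real^'n \<Rightarrow> real" where
  "expected_reward s p = (\<Sum>j\<in>UNIV. p $ j * s p j)"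

text \<open>g is an exposure function: g(p) is a gradient of G at p (relative to D; hence
  determined only modulo translation by the all-ones vector).\<close>
definition is_exposure :: "(real^'n) set \<Rightarrow> (real^'n \<Rightarrow> 'n \<Rightarrow> real) \<Rightarrow> (real^'n \<Rightarrow> real^'n) \<Rightarrow> bool" where
  "is_exposure D s g \<longleftrightarrow>
     (\<forall>p\<in>D. (expected_reward s has_derivative (\<lambda>h. g p \<bullet> h)) (at p within D))"

definition convex_exposure :: "(real^'n) set \<Rightarrow> (real^'n \<Rightarrow> real^'n) \<Rightarrow> bool" where
  "convex_exposure D g \<longleftrightarrow> convex {g p + c *\<^sub>R vec 1 | p c. p \<in> D}"

definition qa_pool :: "(real^'n) set \<Rightarrow> (real^'n \<Rightarrow> real^'n) \<Rightarrow> nat \<Rightarrow> (nat \<Rightarrow> real^'n) \<Rightarrow> (nat \<Rightarrow> real) \<Rightarrow> real^'n \<Rightarrow> bool" where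
  "qa_pool D g m P w q \<longleftrightarrow> q \<in> D \<and>
     (\<exists>c::real. g q = (\<Sum>i\<in>{1..m}. w i *\<^sub>R g (P i)) + c *\<^sub>R vec 1)"

definition bregman :: "(real^'n \<Rightarrow> 'n \<Rightarrow> real) \<Rightarrow> (real^'n \<Rightarrow> real^'n) \<Rightarrow> real^'n \<Rightarrow> real^'n \<Rightarrow> real" where
  "bregman s g p q = expected_reward s p - expected_reward s q - g q \<bullet> (p - q)"

end

theory Submission
  imports Defs
begin

lemma er_split:
  fixes a b y :: "real^'n"
  assumes "y = u *\<^sub>R a + (1-u) *\<^sub>R b"
  shows "expected_reward s y = u * (\<Sum>j\<in>UNIV. a $ j * s y j) + (1-u) * (\<Sum>j\<in>UNIV. b $ j * s y j)"
proof -
  have "expected_reward s y = (\<Sum>j\<in>UNIV. (u * a $ j + (1-u) * b $ j) * s y j)"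
    unfolding expected_reward_def assms by simp
  also have "\<dots> = (\<Sum>j\<in>UNIV. u * (a $ j * s y j) + (1-u) * (b $ j * s y j))"
    by (simp add: algebra_simps)
  finally show ?thesis by (simp add: sum.distrib sum_distrib_left)
qed

lemma G_convex:
  fixes D :: "(real^'n) set"
  assumes cD: "convex D" and pr: "proper_scoring_rule D s"
    and a: "a \<in> D" and b: "b \<in> D" and u: "0 \<le> u" "u \<le> 1"
  shows "expected_reward s (u *\<^sub>R a + (1-u) *\<^sub>R b) \<le> u * expected_reward s a + (1-u) * expected_reward s b"
    and "a \<noteq> b \<Longrightarrow> 0 < u \<Longrightarrow> u < 1 \<Longrightarrow>
      expected_reward s (u *\<^sub>R a + (1-u) *\<^sub>R b) < u * expected_reward s a + (1-u) * expected_reward s b"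
proof -
  define y where "y = u *\<^sub>R a + (1-u) *\<^sub>R b"
  have yD: "y \<in> D" using cD a b u unfolding y_def convex_def by auto
  have ea: "(\<Sum>j\<in>UNIV. a $ j * s y j) \<le> expected_reward s a"
   and eb: "(\<Sum>j\<in>UNIV. b $ j * s y j) \<le> expected_reward s b"
    using pr yD a b unfolding proper_scoring_rule_def expected_reward_def by auto
  have sp: "expected_reward s y = u * (\<Sum>j\<in>UNIV. a $ j * s y j) + (1-u) * (\<Sum>j\<in>UNIV. b $ j * s y j)"
    using er_split y_def by blast
  have m1: "u * (\<Sum>j\<in>UNIV. a $ j * s y j) \<le> u * expected_reward s a"
    using ea u by (simp add: mult_left_mono)
  have m2: "(1-u) * (\<Sum>j\<in>UNIV. b $ j * s y j) \<le> (1-u) * expected_reward s b"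
    using eb u by (simp add: mult_left_mono)
  show "expected_reward s (u *\<^sub>R a + (1-u) *\<^sub>R b) \<le> u * expected_reward s a + (1-u) * expected_reward s b"
    using sp m1 m2 y_def by simp
  assume ab: "a \<noteq> b" and u0: "0 < u" and u1: "u < 1"
  have "y \<noteq> a"
  proof
    assume "y = a"
    then have "(1-u) *\<^sub>R b = (1-u) *\<^sub>R a" unfolding y_def by (simp add: algebra_simps)
    then show False using ab u1 by simp
  qed
  then have "(\<Sum>j\<in>UNIV. a $ j * s y j) \<noteq> expected_reward s a"
    using pr yD a unfolding proper_scoring_rule_def expected_reward_def by auto
  then have "(\<Sum>j\<in>UNIV. a $ j * s y j) < expected_reward s a" using ea by simp
  then have m1': "u * (\<Sum>j\<in>UNIV. a $ j * s y j) < u * expected_reward s a"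
    using u0 by simp
  show "expected_reward s (u *\<^sub>R a + (1-u) *\<^sub>R b) < u * expected_reward s a + (1-u) * expected_reward s b"
    using sp m1' m2 y_def by simp
qed

lemma bregman_pos:
  fixes D :: "(real^'n) set"
  assumes cD: "convex D" and pr: "proper_scoring_rule D s" and ex: "is_exposure D s g"
    and q: "q \<in> D" and x: "x \<in> D" and xq: "x \<noteq> q"
  shows "0 < bregman s g x q"
proof (rule ccontr)
  let ?G = "expected_reward s"
  assume "\<not> 0 < bregman s g x q"
  then have H: "?G x - ?G q - g q \<bullet> (x - q) \<le> 0" unfolding bregman_def by simp
  define v where "v = x - q"
  define d where "d = g q \<bullet> v"
  define mid where "mid = (1/2::real) *\<^sub>R x + (1 - 1/2) *\<^sub>R q"
  have midD: "mid \<in> D" using cD x q unfolding mid_def convex_def by auto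
  have "?G mid < (1/2) * ?G x + (1 - 1/2) * ?G q"
    using G_convex(2)[OF cD pr x q, of "1/2"] xq unfolding mid_def by simp
  define e where "e = 2 * (?G mid - ?G q)"
  have "2 * ?G mid < ?G x + ?G q"
    using \<open>?G mid < (1/2) * ?G x + (1 - 1/2) * ?G q\<close> by simp
  moreover have "e = 2 * ?G mid - 2 * ?G q" unfolding e_def by simp
  moreover have "d = g q \<bullet> (x - q)" unfolding d_def v_def by simp
  ultimately have ed: "e < d" using H by linarith
  have vpos: "norm v > 0" using xq unfolding v_def by simp
  define eps where "eps = (d - e) / 2"
  have epspos: "eps > 0" using ed unfolding eps_def by simp
  have der: "(?G has_derivative (\<lambda>h. g q \<bullet> h)) (at q within D)"
    using ex q unfolding is_exposure_def by blast
  then obtain del where del: "del > 0"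
    and dl: "\<And>y. y \<in> D \<Longrightarrow> norm (y - q) < del \<Longrightarrow>
       norm (?G y - ?G q - g q \<bullet> (y - q)) \<le> (eps / norm v) * norm (y - q)"
    unfolding has_derivative_within_alt using epspos vpos
    by (meson divide_pos_pos)
  define t where "t = min (1/4) (del / (2 * norm v))"
  have t0: "t > 0" using del vpos unfolding t_def by simp
  have t1: "t \<le> 1/4" unfolding t_def by simp
  have tn: "t * norm v < del"
  proof -
    have "t * norm v \<le> (del / (2 * norm v)) * norm v"
      using vpos unfolding t_def by (intro mult_right_mono) auto
    also have "\<dots> = del / 2" using vpos by simp
    finally show ?thesis using del by simp
  qed
  define y where "y = (2*t) *\<^sub>R mid + (1 - 2*t) *\<^sub>R q"
  have "mid - q = (1/2::real) *\<^sub>R v" unfolding mid_def v_def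
    by (simp add: scaleR_diff_right scaleR_diff_left)
  have "y - q = (2*t) *\<^sub>R (mid - q)" unfolding y_def
    by (simp add: scaleR_diff_right scaleR_diff_left)
  then have yq: "y - q = t *\<^sub>R v" using \<open>mid - q = (1/2::real) *\<^sub>R v\<close> by simp
  have yD: "y \<in> D" using cD midD q t0 t1 unfolding y_def convex_def by auto
  have c1: "?G y \<le> (2*t) * ?G mid + (1 - 2*t) * ?G q"
    using G_convex(1)[OF cD pr midD q, of "2*t"] t0 t1 unfolding y_def by simp
  have c1': "?G y - ?G q \<le> t * e" using c1 unfolding e_def by (simp add: algebra_simps)
  have ny: "norm (y - q) = t * norm v" using yq t0 by simp
  have "norm (?G y - ?G q - g q \<bullet> (y - q)) \<le> (eps / norm v) * (t * norm v)"
    using dl[OF yD] ny tn by simp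
  also have "\<dots> = t * eps" using vpos by simp
  finally have "norm (?G y - ?G q - t * d) \<le> t * eps"
    using yq unfolding d_def by (simp add: inner_scaleR_right)
  then have "t * d - t * eps \<le> ?G y - ?G q" by simp
  with c1' have "t * (d - eps) \<le> t * e" by (simp add: algebra_simps)
  then have "d - eps \<le> e" using t0 by simp
  then have "d - (d - e) / 2 \<le> e" unfolding eps_def .
  then have "d \<le> e" by (simp add: field_simps)
  then show False using ed by simp
qed

theorem proposition4p3:
  fixes D :: "(real^'n) set"
    and s :: "real^'n \<Rightarrow> 'n \<Rightarrow> real"
    and g :: "real^'n \<Rightarrow> real^'n"
    and m :: nat and P :: "nat \<Rightarrow> real^'n" and w :: "nat \<Rightarrow> real"
  assumes "forecast_domain D"
    and "proper_scoring_rule D s"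
    and "continuous_scoring_rule D s"
    and "is_exposure D s g"
    and "convex_exposure D g"
    and "\<forall>i\<in>{1..m}. P i \<in> D"
    and "\<forall>i\<in>{1..m}. 0 \<le> w i"
    and "(\<Sum>i\<in>{1..m}. w i) = 1"
  shows "(\<exists>!q. qa_pool D g m P w q)
    \<and> (\<forall>q. qa_pool D g m P w q \<longrightarrow>
          (\<forall>x\<in>D. x \<noteq> q \<longrightarrow>
             (\<Sum>i\<in>{1..m}. w i * bregman s g q (P i)) < (\<Sum>i\<in>{1..m}. w i * bregman s g x (P i))))"
proof -
  have cD: "convex D" and sub: "D \<subseteq> std_simplex" using assms(1) unfolding forecast_domain_def by auto
  have sum1: "\<And>p. p \<in> D \<Longrightarrow> vec 1 \<bullet> p = 1"
  proof -
    fix p assume "p \<in> D"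
    then have "(\<Sum>j\<in>UNIV. p $ j) = 1" using sub unfolding std_simplex_def by auto
    then show "vec 1 \<bullet> p = 1" by (simp add: inner_vec_def)
  qed
  define S where "S = (\<Sum>i\<in>{1..m}. w i *\<^sub>R g (P i))"
  have ident: "(\<Sum>i\<in>{1..m}. w i * bregman s g x (P i)) - (\<Sum>i\<in>{1..m}. w i * bregman s g q (P i))
      = bregman s g x q" if q: "qa_pool D g m P w q" and xD: "x \<in> D" for x q
  proof -
    from q obtain c where qD: "q \<in> D" and gq: "g q = S + c *\<^sub>R vec 1"
      unfolding qa_pool_def S_def by auto
    have "(\<Sum>i\<in>{1..m}. w i * bregman s g x (P i)) - (\<Sum>i\<in>{1..m}. w i * bregman s g q (P i))
        = (\<Sum>i\<in>{1..m}. w i * (expected_reward s x - expected_reward s q - g (P i) \<bullet> (x - q)))"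
      unfolding sum_subtractf[symmetric] bregman_def
      by (rule sum.cong) (simp_all add: algebra_simps inner_diff_right)
    also have "\<dots> = (\<Sum>i\<in>{1..m}. w i) * (expected_reward s x - expected_reward s q)
        - (\<Sum>i\<in>{1..m}. w i * (g (P i) \<bullet> (x - q)))"
      by (simp add: sum_distrib_right sum_subtractf right_diff_distrib)
    also have "(\<Sum>i\<in>{1..m}. w i * (g (P i) \<bullet> (x - q))) = S \<bullet> (x - q)"
      unfolding S_def by (simp add: inner_sum_left)
    also have "S \<bullet> (x - q) = g q \<bullet> (x - q)"
      using gq sum1[OF xD] sum1[OF qD] by (simp add: inner_diff_right inner_add_left)
    finally show ?thesis using assms(8) unfolding bregman_def by simp
  qed
  have exi: "\<exists>q. qa_pool D g m P w q"
  proof -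
    let ?C = "{g p + c *\<^sub>R vec 1 | p c. p \<in> D}"
    have "S \<in> ?C"
      unfolding S_def
    proof (rule convex_sum)
      show "convex ?C" using assms(5) unfolding convex_exposure_def .
      show "finite {1..m}" by simp
      show "\<And>i. i \<in> {1..m} \<Longrightarrow> 0 \<le> w i" using assms(7) by auto
      show "(\<Sum>i\<in>{1..m}. w i) = 1" by (rule assms(8))
      show "\<And>i. i \<in> {1..m} \<Longrightarrow> g (P i) \<in> ?C"
      proof -
        fix i assume "i \<in> {1..m}"
        then have "P i \<in> D" using assms(6) by auto
        then have "g (P i) = g (P i) + 0 *\<^sub>R vec 1 \<and> P i \<in> D" by simp
        then show "g (P i) \<in> ?C" by blast
      qed
    qed
    then obtain p c where "p \<in> D" "S = g p + c *\<^sub>R vec 1" by auto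
    then have "qa_pool D g m P w p" unfolding qa_pool_def S_def
      by (auto intro!: exI[of _ "-c"] simp: algebra_simps)
    then show ?thesis by blast
  qed
  have mini: "\<forall>q. qa_pool D g m P w q \<longrightarrow>
          (\<forall>x\<in>D. x \<noteq> q \<longrightarrow>
             (\<Sum>i\<in>{1..m}. w i * bregman s g q (P i)) < (\<Sum>i\<in>{1..m}. w i * bregman s g x (P i)))"
  proof (intro allI impI ballI)
    fix q x assume q: "qa_pool D g m P w q" and xD: "x \<in> D" and xq: "x \<noteq> q"
    have "q \<in> D" using q unfolding qa_pool_def by auto
    have "0 < bregman s g x q" using bregman_pos[OF cD assms(2) assms(4) \<open>q \<in> D\<close> xD xq] .
    then show "(\<Sum>i\<in>{1..m}. w i * bregman s g q (P i)) < (\<Sum>i\<in>{1..m}. w i * bregman s g x (P i))"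
      using ident[OF q xD] by simp
  qed
  have uni: "q1 = q2" if q1: "qa_pool D g m P w q1" and q2: "qa_pool D g m P w q2" for q1 q2
  proof (rule ccontr)
    assume ne: "q1 \<noteq> q2"
    have "q1 \<in> D" "q2 \<in> D" using q1 q2 unfolding qa_pool_def by auto
    have "q2 \<noteq> q1" using ne by simp
    have a: "(\<Sum>i\<in>{1..m}. w i * bregman s g q1 (P i)) < (\<Sum>i\<in>{1..m}. w i * bregman s g q2 (P i))"
      using mini q1 \<open>q2 \<in> D\<close> \<open>q2 \<noteq> q1\<close> by blast
    have b: "(\<Sum>i\<in>{1..m}. w i * bregman s g q2 (P i)) < (\<Sum>i\<in>{1..m}. w i * bregman s g q1 (P i))"
      using mini q2 \<open>q1 \<in> D\<close> ne by blast
    from a b show False by simp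
  qed
  show ?thesis using exi uni mini by blast
qed

end
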